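(* The ratio $\frac{\psi_2(x)}{\psi_1(x)}$ is strictly increasing for $x\ge1$.
   Context: For $x\ge1$, $\psi_1(x)=\frac32\int_0^{\pi/2}(1-x^{-2}\sin^2u)^{3/2}\,du$ and $\psi_2(x)=\frac32(1-x^{-2})^2\int_0^{\pi/2}\frac{\sin^4v}{\sqrt{1-(1-x^{-2})\sin^2v}}\,dv$. *)

theory Defs
  imports "HOL-Analysis.Analysis"
begin

definition psi1 :: "real \<Rightarrow> real" where
  "psi1 x = 3/2 * integral {0..pi/2} (\<lambda>u. (1 - sin u ^ 2 / x ^ 2) powr (3/2))"

definition psi2 :: "real \<Rightarrow> real" where
  "psi2 x = 3/2 * (1 - 1 / x ^ 2) ^ 2 *
     integral {0..pi/2} (\<lambda>v. sin v ^ 4 / sqrt (1 - (1 - 1 / x ^ 2) * sin v ^ 2))"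

end

theory Submission
  imports Defs
begin

lemma key_ineq:
  fixes a b t :: real
  assumes "0 < b" "b < a" "a < 1" "0 \<le> t" "t \<le> 1"
  shows "1 - t * b \<le> (1 - b) / (1 - a) * (1 - t * a)"
proof -
  have "(1 - t*b) * (1 - a) \<le> (1 - b) * (1 - t*a)"
  proof -
    have "0 \<le> (a - b) * (1 - t)" using assms by simp
    thus ?thesis by (simp add: algebra_simps)
  qed
  thus ?thesis using assms by (simp add: field_simps)
qed

lemma base_pos:
  fixes x u :: real
  assumes "1 < x"
  shows "0 < 1 - sin u ^ 2 / x ^ 2"
proof -
  have "sin u ^ 2 \<le> 1" using sin_squared_eq[of u] zero_le_power2[of "cos u"] by linarith
  moreover have "1 < x^2" using assms by (metis less_1_mult one_less_power pos2)
  ultimately have "sin u ^ 2 / x^2 < 1" by (simp add: divide_less_eq)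
  thus ?thesis by simp
qed

lemma int1:
  fixes x :: real
  assumes "1 < x"
  shows "(\<lambda>u. (1 - sin u ^ 2 / x ^ 2) powr (3/2)) integrable_on {0..pi/2}"
  apply (rule integrable_continuous_interval)
  apply (intro continuous_intros)
     apply (use assms in simp)
  apply (rule ballI) using base_pos[OF assms] by (metis less_irrefl)

lemma sqrt_base_pos:
  fixes k v :: real
  assumes "k < 1"
  shows "0 < 1 - k * sin v ^ 2"
proof -
  have s: "sin v ^ 2 \<le> 1" "0 \<le> sin v ^ 2"
    using sin_squared_eq[of v] zero_le_power2[of "cos v"] zero_le_power2[of "sin v"] by linarith+
  show ?thesis
  proof (cases "k \<le> 0")
    case True
    then have "k * sin v ^ 2 \<le> 0" using s by (simp add: mult_nonpos_nonneg)
    then show ?thesis by simp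
  next
    case False
    then have "k * sin v ^ 2 \<le> k" using s by (simp add: mult_left_le)
    then show ?thesis using assms by simp
  qed
qed

lemma int2:
  fixes k :: real
  assumes "k < 1"
  shows "(\<lambda>v. sin v ^ 4 / sqrt (1 - k * sin v ^ 2)) integrable_on {0..pi/2}"
  apply (rule integrable_continuous_interval)
  apply (intro continuous_intros)
  using sqrt_base_pos[OF assms] by (smt (verit) real_sqrt_gt_zero)+

lemma sin_sq_bounds: "0 \<le> sin v ^ 2" "sin v ^ 2 \<le> (1::real)"
  using sin_squared_eq[of v] zero_le_power2[of "cos v"] zero_le_power2[of "sin v"] by linarith+

lemma psi1_bound:
  fixes x y :: real
  assumes "1 < x" "x < y"
  shows "psi1 y \<le> ((1 - 1/y^2) / (1 - 1/x^2)) powr (3/2) * psi1 x"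
proof -
  define r where "r = (1 - 1/y^2) / (1 - 1/x^2)"
  have x2: "1 < x^2" using assms by (metis less_1_mult one_less_power pos2)
  have xy: "x^2 < y^2" using assms by (simp add: power_strict_mono)
  have a: "0 < 1/y^2" "1/y^2 < 1/x^2" "1/x^2 < 1"
    using x2 xy assms by (auto simp: divide_simps)
  have r0: "0 \<le> r" unfolding r_def using a by (intro divide_nonneg_nonneg) linarith+
  have pt: "(1 - sin u ^ 2 / y ^ 2) powr (3/2) \<le> r powr (3/2) * (1 - sin u ^ 2 / x ^ 2) powr (3/2)"
    if "u \<in> {0..pi/2}" for u
  proof -
    have "1 - sin u ^ 2 * (1/y^2) \<le> r * (1 - sin u ^ 2 * (1/x^2))"
      unfolding r_def by (rule key_ineq[OF a sin_sq_bounds])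
    then have le: "1 - sin u ^ 2 / y^2 \<le> r * (1 - sin u ^ 2 / x^2)" by simp
    have "(1 - sin u ^ 2 / y ^ 2) powr (3/2) \<le> (r * (1 - sin u ^ 2 / x^2)) powr (3/2)"
      using le base_pos[of y u] assms by (intro powr_mono2) auto
    also have "\<dots> = r powr (3/2) * (1 - sin u ^ 2 / x ^ 2) powr (3/2)"
      by (rule powr_mult)
    finally show ?thesis .
  qed
  have "integral {0..pi/2} (\<lambda>u. (1 - sin u ^ 2 / y ^ 2) powr (3/2))
     \<le> integral {0..pi/2} (\<lambda>u. r powr (3/2) * (1 - sin u ^ 2 / x ^ 2) powr (3/2))"
    apply (rule integral_le)
    using int1[of y] assms apply simp
    using int1[OF assms(1)] apply (rule integrable_on_mult_right)
    using pt by auto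
  then show ?thesis unfolding psi1_def r_def[symmetric] by simp
qed

lemma psi1_pos:
  fixes x :: real
  assumes "1 < x"
  shows "0 < psi1 x"
proof -
  have x2: "1 < x^2" using assms by (metis less_1_mult one_less_power pos2)
  have k: "0 < 1 - 1/x^2" using x2 by (simp add: divide_simps)
  have pt: "(1 - 1/x^2) powr (3/2) \<le> (1 - sin u ^ 2 / x ^ 2) powr (3/2)" for u
  proof (rule powr_mono2)
    show "1 - 1/x^2 \<le> 1 - sin u ^ 2 / x ^ 2"
      using sin_sq_bounds[of u] x2 by (simp add: divide_right_mono)
  qed (use k in auto)
  have "integral {0..pi/2} (\<lambda>u. (1 - 1/x^2) powr (3/2)) \<le> integral {0..pi/2} (\<lambda>u. (1 - sin u ^ 2 / x ^ 2) powr (3/2))"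
    by (rule integral_le) (use int1[OF assms] pt in auto)
  moreover have "0 < integral {0..pi/2} (\<lambda>u. (1 - 1/x^2) powr (3/2))"
  proof -
    have "0 < (1 - 1/x^2) powr (3/2)" using k by (metis powr_gt_zero less_irrefl)
    then show ?thesis using pi_gt_zero by simp
  qed
  ultimately show ?thesis unfolding psi1_def by linarith
qed


definition II :: "real \<Rightarrow> real" where
  "II k = integral {0..pi/2} (\<lambda>v. sin v ^ 4 / sqrt (1 - k * sin v ^ 2))"

lemma psi2_II: "psi2 x = 3/2 * (1 - 1/x^2)^2 * II (1 - 1/x^2)"
  unfolding psi2_def II_def by simp

lemma II_mono:
  assumes "k1 \<le> k2" "k2 < 1"
  shows "II k1 \<le> II k2"
  unfolding II_def
proof (rule integral_le)
  show "(\<lambda>v. sin v ^ 4 / sqrt (1 - k1 * sin v ^ 2)) integrable_on {0..pi/2}"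
    using int2 assms by simp
  show "(\<lambda>v. sin v ^ 4 / sqrt (1 - k2 * sin v ^ 2)) integrable_on {0..pi/2}"
    using int2 assms by simp
  fix v :: real
  have p2: "0 < 1 - k2 * sin v ^ 2" using sqrt_base_pos assms by simp
  have "k1 * sin v ^ 2 \<le> k2 * sin v ^ 2"
    using assms sin_sq_bounds[of v] by (simp add: mult_right_mono)
  then have "sqrt (1 - k2 * sin v ^ 2) \<le> sqrt (1 - k1 * sin v ^ 2)" by simp
  moreover have "0 < sqrt (1 - k2 * sin v ^ 2)" using p2 by simp
  moreover have "0 \<le> sin v ^ 4" by simp
  ultimately show "sin v ^ 4 / sqrt (1 - k1 * sin v ^ 2) \<le> sin v ^ 4 / sqrt (1 - k2 * sin v ^ 2)"
    by (simp add: divide_left_mono)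
qed

lemma sin4_lower:
  assumes "v \<in> {pi/4..pi/2}"
  shows "1/4 \<le> sin v ^ 4"
proof -
  have "sqrt 2 / 2 \<le> sin v"
    using sin_monotone_2pi_le[of "pi/4" v] assms sin_45 by auto
  moreover have "0 \<le> sqrt 2 / 2" by simp
  ultimately have "(sqrt 2 / 2)^2 \<le> sin v ^ 2" by (rule power_mono)
  then have h: "1/2 \<le> sin v ^ 2" by (simp add: power_divide)
  then have "(1/2)^2 \<le> (sin v ^ 2)^2" by (intro power_mono) auto
  moreover have "(sin v ^ 2)^2 = sin v ^ 4" by (simp add: power_mult[symmetric])
  moreover have "((1::real)/2)^2 = 1/4" by (simp add: power2_eq_square)
  ultimately show ?thesis by simp
qed

lemma II_pos:
  assumes "0 \<le> k" "k < 1"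
  shows "0 < II k"
proof -
  have intg: "(\<lambda>v. sin v ^ 4 / sqrt (1 - k * sin v ^ 2)) integrable_on {0..pi/2}"
    using int2 assms by simp
  have nn: "0 \<le> sin v ^ 4 / sqrt (1 - k * sin v ^ 2)" for v
    using sqrt_base_pos[OF assms(2), of v]
    by (intro divide_nonneg_nonneg) (simp_all add: zero_le_even_power)
  have sub: "{pi/4..pi/2} \<subseteq> {0..pi/2}" using pi_gt_zero by auto
  have intg2: "(\<lambda>v. sin v ^ 4 / sqrt (1 - k * sin v ^ 2)) integrable_on {pi/4..pi/2}"
    by (rule integrable_subinterval_real[OF intg]) (use pi_gt_zero in auto)
  have le1: "sqrt (1 - k * sin v ^ 2) \<le> 1" for v
    using assms sin_sq_bounds[of v] by (simp add: mult_nonneg_nonneg)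
  have pt: "1/4 \<le> sin v ^ 4 / sqrt (1 - k * sin v ^ 2)" if "v \<in> {pi/4..pi/2}" for v
  proof -
    have p: "0 < sqrt (1 - k * sin v ^ 2)" using sqrt_base_pos[OF assms(2)] by simp
    have "1/4 \<le> sin v ^ 4" using sin4_lower[OF that] .
    also have "\<dots> \<le> sin v ^ 4 / sqrt (1 - k * sin v ^ 2)"
      using p le1[of v] by (simp add: le_divide_eq zero_le_even_power mult_left_le)
    finally show ?thesis .
  qed
  have "integral {pi/4..pi/2} (\<lambda>v. 1/4) \<le> integral {pi/4..pi/2} (\<lambda>v. sin v ^ 4 / sqrt (1 - k * sin v ^ 2))"
    by (rule integral_le) (use intg2 pt in auto)
  moreover have "integral {pi/4..pi/2} (\<lambda>v. sin v ^ 4 / sqrt (1 - k * sin v ^ 2)) \<le> II k"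
    unfolding II_def by (rule integral_subset_le[OF sub intg2 intg]) (use nn in auto)
  moreover have "0 < integral {pi/4..pi/2} (\<lambda>v::real. 1/4::real)"
    using pi_gt_zero by simp
  ultimately show ?thesis by linarith
qed


lemma kx_bounds:
  fixes x :: real
  assumes "1 < x"
  shows "0 < 1 - 1/x^2" "1 - 1/x^2 < 1"
proof -
  have x2: "1 < x^2" using assms by (metis less_1_mult one_less_power pos2)
  then show "0 < 1 - 1/x^2" by (simp add: divide_simps)
  show "1 - 1/x^2 < 1" using assms by simp
qed

lemma final_ineq:
  fixes P1x P1y P2x P2y s :: real
  assumes "1 < s" "0 < P1x" "0 < P1y" "0 < P2x"
    "P1y \<le> s^3 * P1x" "s^4 * P2x \<le> P2y"
  shows "P2x / P1x < P2y / P1y"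
proof -
  have "P2x * P1y \<le> P2x * (s^3 * P1x)" using assms by (simp add: mult_left_mono)
  also have "\<dots> < s * (P2x * (s^3 * P1x))" using assms by simp
  also have "\<dots> = (s^4 * P2x) * P1x" by (simp add: power_numeral_reduce)
  also have "\<dots> \<le> P2y * P1x" using assms by (simp add: mult_right_mono)
  finally have "P2x * P1y < P2y * P1x" .
  then show ?thesis using assms by (simp add: divide_simps)
qed

theorem mainTheorem18:
  shows "strict_mono_on {1..} (\<lambda>x. psi2 x / psi1 x)"
proof (rule strict_mono_onI)
  fix x y :: real
  assume x: "x \<in> {1..}" and y: "y \<in> {1..}" and xy: "x < y"
  have y1: "1 < y" using x xy by simp
  obtain ky where ky: "ky = 1 - 1/y^2" by simp
  have ky01: "0 < ky" "ky < 1" using kx_bounds[OF y1] ky by auto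
  have P1y: "0 < psi1 y" by (rule psi1_pos[OF y1])
  have P2y: "0 < psi2 y"
    unfolding psi2_II ky[symmetric] using ky01 II_pos[of ky] by simp
  show "psi2 x / psi1 x < psi2 y / psi1 y"
  proof (cases "x = 1")
    case True
    then have "psi2 x = 0" unfolding psi2_II by simp
    then show ?thesis using P1y P2y True by simp
  next
    case False
    then have x1: "1 < x" using x by simp
    obtain kx where kx: "kx = 1 - 1/x^2" by simp
    have kx01: "0 < kx" "kx < 1" using kx_bounds[OF x1] kx by auto
    have x2: "x^2 < y^2" using x1 xy by (simp add: power_strict_mono)
    have "1/y^2 < 1/x^2" 
    proof -
      have "0 < y^2 * x^2" using x1 y1 by simp
      then show ?thesis using x2 by (intro divide_strict_left_mono) auto
    qed
    then have kxy: "kx < ky" using kx ky by simp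
    define r where "r = ky / kx"
    have r1: "1 < r" unfolding r_def using kxy kx01 by simp
    define s where "s = sqrt r"
    have s1: "1 < s" unfolding s_def using r1 by simp
    have rs: "r = s^2" unfolding s_def using r1 by simp
    have r32: "r powr (3/2) = s^3"
    proof -
      have e2: "s powr 2 = s^2" using powr_realpow[of s 2] s1 by simp
      have e3: "s powr 3 = s^3" using powr_realpow[of s 3] s1 by simp
      have "r powr (3/2) = (s powr 2) powr (3/2)" using rs e2 by simp
      also have "\<dots> = s powr (2 * (3/2))" by (rule powr_powr)
      also have "\<dots> = s^3" using e3 by simp
      finally show ?thesis .
    qed
    have P1x: "0 < psi1 x" by (rule psi1_pos[OF x1])
    have P2x: "0 < psi2 x"
      unfolding psi2_II kx[symmetric] using kx01 II_pos[of kx] by simp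
    have b1: "psi1 y \<le> s^3 * psi1 x"
      using psi1_bound[OF x1 xy] r32 unfolding r_def kx ky by simp
    have "ky = r * kx" unfolding r_def using kx01 by simp
    then have "ky^2 = r^2 * kx^2" by (simp only: power_mult_distrib)
    moreover have "r^2 = s^4" unfolding rs by algebra
    ultimately have eq: "ky^2 = s^4 * kx^2" by simp
    have "II kx \<le> II ky" using II_mono kxy ky01 by simp
    then have "(s^4*kx^2) * II kx \<le> (s^4*kx^2) * II ky"
      by (rule mult_left_mono) simp
    then have m: "(s^4*kx^2) * II kx \<le> ky^2 * II ky" using eq by simp
    have e1: "s^4 * psi2 x = 3/2 * ((s^4*kx^2) * II kx)"
      unfolding psi2_II kx[symmetric] by (simp add: mult_ac)
    have e2: "psi2 y = 3/2 * (ky^2 * II ky)"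
      unfolding psi2_II ky[symmetric] by (simp add: mult_ac)
    have b2: "s^4 * psi2 x \<le> psi2 y" unfolding e1 e2 using m by (simp only: mult_le_cancel_left_pos zero_less_divide_iff)
    show ?thesis by (rule final_ineq[OF s1 P1x P1y P2x b1 b2])
  qed
qed

end
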